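(* There exists a constant $C$ such that for every integer $t\ge0$ whose binary expansion has $M$ maximal blocks of $1$s, \[|\kappa_2(t)|\le CM,\quad |\kappa_3(t)|\le CM,\quad |\kappa_4(t)|\le CM,\quad |\kappa_5(t)|\le CM.\]
   Context: $s(n)$ is the number of $1$s in the binary expansion of $n\ge0$. For integers $j$ and $t\ge0$, $\delta(j,t)=\lim_{N\to\infty}\frac1N|\{0\le n<N: s(n+t)-s(n)=j\}|$, a probability distribution on $\mathbb Z$. $\kappa_j(t)$ denotes the $j$-th cumulant of this distribution, i.e. the real numbers with $\log\sum_{k\in\mathbb Z}\delta(k,t)e^{2\pi i k\vartheta}=\sum_{j\ge0}\frac{\kappa_j(t)}{j!}(2\pi i\vartheta)^j$ for $\vartheta$ near $0$. A maximal block of $1$s is a maximal run of consecutive binary digits equal to $1$. *)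

theory Defs
  imports "HOL-Analysis.Analysis"
begin

definition binsum :: "nat \<Rightarrow> nat" where
  "binsum n = card {i. bit n i}"

definition delta :: "int \<Rightarrow> nat \<Rightarrow> real" where
  "delta j t = lim (\<lambda>N. real (card {n. n < N \<and> int (binsum (n + t)) - int (binsum n) = j}) / real N)"

definition charfun_delta :: "nat \<Rightarrow> complex \<Rightarrow> complex" where
  "charfun_delta t \<theta> = (\<Sum>\<^sub>\<infinity>k\<in>(UNIV::int set). complex_of_real (delta k t) * exp (2 * of_real pi * \<i> * of_int k * \<theta>))"

text \<open>j-th cumulant: kappa_j(t) = (d/dtheta)^j log(charfun) at 0, divided by (2 pi i)^j,
  i.e. the Taylor coefficients in the expansion log phi = sum kappa_j/j! (2 pi i theta)^j.\<close>
definition cumulant :: "nat \<Rightarrow> nat \<Rightarrow> complex" where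
  "cumulant j t = (deriv ^^ j) (\<lambda>\<theta>. Ln (charfun_delta t \<theta>)) 0 / (2 * of_real pi * \<i>) ^ j"

text \<open>Number of maximal blocks of 1s in the binary expansion of t (counted by their top digit).\<close>
definition num_blocks :: "nat \<Rightarrow> nat" where
  "num_blocks t = card {i. bit t i \<and> \<not> bit t (Suc i)}"

end

theory Submission
  imports Defs "HOL-Complex_Analysis.Complex_Analysis"
begin


lemma finite_bits: "finite {i. bit (m::nat) i}"
proof (rule finite_subset[of _ "{..<m}"])
  show "{i. bit m i} \<subseteq> {..<m}"
  proof
    fix i assume "i \<in> {i. bit m i}"
    hence "odd (m div 2^i)" by (simp add: bit_iff_odd)
    hence "m div 2^i \<noteq> 0" by (metis even_zero)
    hence "2^i \<le> m" by (simp add: div_eq_0_iff)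
    moreover have "i < 2^i" by (rule less_exp)
    ultimately have "i < m" by linarith
    thus "i \<in> {..<m}" by simp
  qed
qed simp

lemma bits_split: "{i. bit (n::nat) i} = (if odd n then {0} else {}) \<union> Suc ` {i. bit (n div 2) i}"
  apply (auto simp: image_iff bit_0)
  apply (metis bit_0 bit_Suc not0_implies_Suc)
  apply (simp add: bit_Suc)
  apply (metis bit_0 bit_Suc not0_implies_Suc)
  by (simp add: bit_Suc)

lemma binsum_split: "binsum n = binsum (n div 2) + (if odd n then 1 else 0)"
proof -
  have "card (Suc ` {i. bit (n div 2) i}) = card {i. bit (n div 2) i}"
    by (simp add: card_image)
  moreover have "0 \<notin> Suc ` {i. bit (n div 2) i}" by auto
  ultimately show ?thesis unfolding binsum_def
    by (subst bits_split) (auto simp: finite_bits)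
qed

lemma binsum_double[simp]: "binsum (2*m) = binsum m"
  using binsum_split[of "2*m"] by simp
lemma binsum_double1[simp]: "binsum (2*m+1) = binsum m + 1"
  using binsum_split[of "2*m+1"] by simp
lemma binsum_0[simp]: "binsum 0 = 0" by (simp add: binsum_def)

lemma binsum_Suc_le: "binsum (Suc n) \<le> binsum n + 1"
proof (induction n rule: less_induct)
  case (less n)
  show ?case
  proof (cases "even n")
    case True then obtain m where "n = 2*m" by auto
    then show ?thesis using binsum_double1[of m] by simp
  next
    case False then obtain m where m: "n = 2*m+1" by (metis oddE)
    have "Suc n = 2*(Suc m)" using m by simp
    hence "binsum (Suc n) = binsum (Suc m)" by (metis binsum_double)
    also have "\<dots> \<le> binsum m + 1" using less m by simp
    also have "\<dots> = binsum n" using m binsum_double1[of m] by simp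
    finally show ?thesis by simp
  qed
qed

lemma blocks_split: "{i. bit (n::nat) i \<and> \<not> bit n (Suc i)} =
   (if odd n \<and> even (n div 2) then {0} else {}) \<union> Suc ` {i. bit (n div 2) i \<and> \<not> bit (n div 2) (Suc i)}"
proof (intro set_eqI iffI)
  fix x assume x: "x \<in> {i. bit n i \<and> \<not> bit n (Suc i)}"
  show "x \<in> (if odd n \<and> even (n div 2) then {0} else {}) \<union> Suc ` {i. bit (n div 2) i \<and> \<not> bit (n div 2) (Suc i)}"
  proof (cases x)
    case 0 then show ?thesis using x by (auto simp: bit_0 bit_Suc)
  next
    case (Suc y) then show ?thesis using x by (auto simp: bit_Suc)
  qed
next
  fix x assume x: "x \<in> (if odd n \<and> even (n div 2) then {0} else {}) \<union> Suc ` {i. bit (n div 2) i \<and> \<not> bit (n div 2) (Suc i)}"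
  show "x \<in> {i. bit n i \<and> \<not> bit n (Suc i)}"
  proof (cases "x \<in> Suc ` {i. bit (n div 2) i \<and> \<not> bit (n div 2) (Suc i)}")
    case True then obtain y where "x = Suc y" "bit (n div 2) y" "\<not> bit (n div 2) (Suc y)" by auto
    then show ?thesis by (simp add: bit_Suc)
  next
    case False
    then have "x = 0" "odd n" "even (n div 2)" using x by (auto split: if_splits)
    then show ?thesis by (simp add: bit_Suc bit_0)
  qed
qed

lemma num_blocks_split: "num_blocks n = num_blocks (n div 2) + (if odd n \<and> even (n div 2) then 1 else 0)"
proof -
  have fin: "finite {i. bit (n div 2) i \<and> \<not> bit (n div 2) (Suc i)}"
    by (rule finite_subset[OF _ finite_bits[of "n div 2"]]) auto
  have "card (Suc ` {i. bit (n div 2) i \<and> \<not> bit (n div 2) (Suc i)}) = card {i. bit (n div 2) i \<and> \<not> bit (n div 2) (Suc i)}"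
    by (simp add: card_image)
  moreover have "0 \<notin> Suc ` {i. bit (n div 2) i \<and> \<not> bit (n div 2) (Suc i)}" by auto
  ultimately show ?thesis unfolding num_blocks_def
    by (subst blocks_split) (auto simp: fin)
qed

lemma num_blocks_pos: "t > 0 \<Longrightarrow> num_blocks t \<ge> 1"
proof (induction t rule: less_induct)
  case (less t)
  show ?case
  proof (cases "t div 2 = 0")
    case True then have "t = 1" using less.prems by auto
    then show ?thesis using num_blocks_split[of 1] by simp
  next
    case False then show ?thesis using less.IH[of "t div 2"] num_blocks_split[of t] by simp
  qed
qed



definition cntd :: "nat \<Rightarrow> int \<Rightarrow> nat \<Rightarrow> nat" where
  "cntd t j N = card {n. n < N \<and> int (binsum (n + t)) - int (binsum n) = j}"

lemma card_less_Suc: "card {n. n < Suc N \<and> P n} = card {n. n < N \<and> P n} + (if P N then 1 else 0)"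
proof -
  have "{n. n < Suc N \<and> P n} = (if P N then insert N {n. n < N \<and> P n} else {n. n < N \<and> P n})"
    by (auto simp: less_Suc_eq)
  then show ?thesis by simp
qed

lemma card_split_parity:
  "card {n. n < (N::nat) \<and> P n} = card {m. m < (N+1) div 2 \<and> P (2*m)} + card {m. m < N div 2 \<and> P (2*m+1)}"
proof (induction N)
  case 0 then show ?case by simp
next
  case (Suc N)
  show ?case
  proof (cases "even N")
    case True
    then obtain k where k: "N = 2*k" by auto
    have a: "(Suc N + 1) div 2 = Suc k" "(N+1) div 2 = k" "Suc N div 2 = k" "N div 2 = k" using k by auto
    show ?thesis unfolding card_less_Suc Suc a using card_less_Suc[of k "\<lambda>m. P (2*m)"] k by simp
  next
    case False
    then obtain k where k: "N = 2*k+1" by (metis oddE)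
    have a: "(Suc N + 1) div 2 = Suc k" "(N+1) div 2 = Suc k" "Suc N div 2 = Suc k" "N div 2 = k" using k by auto
    show ?thesis unfolding card_less_Suc Suc a using card_less_Suc[of k "\<lambda>m. P (2*m+1)"] k by simp
  qed
qed

lemma cnt_even: "cntd (2 * u) j N = cntd u j ((N+1) div 2) + cntd u j (N div 2)"
proof -
  have e1: "2*m + 2*u = 2*(m+u)" for m :: nat by simp
  have e2: "2*m + 1 + 2*u = 2*(m+u)+1" for m :: nat by simp
  show ?thesis unfolding cntd_def
    by (subst card_split_parity) (simp only: e1 e2 binsum_double binsum_double1, simp)
qed

lemma cnt_odd: "cntd (2 * u + 1) j N = cntd u (j-1) ((N+1) div 2) + cntd (u+1) (j+1) (N div 2)"
proof -
  have e1: "2*m + (2 * u + 1) = 2*(m+u)+1" for m :: nat by simp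
  have e2: "2*m + 1 + (2 * u + 1) = 2*(m+(u+1))" for m :: nat by simp
  have c1: "{m. m < A \<and> int (binsum (m + u) + 1) - int (binsum m) = j} = {m. m < A \<and> int (binsum (m + u)) - int (binsum m) = j - 1}" for A
    by auto
  have c2: "{m. m < A \<and> int (binsum (m + (u+1))) - int (binsum m + 1) = j} = {m. m < A \<and> int (binsum (m + (u+1))) - int (binsum m) = j + 1}" for A
    by auto
  show ?thesis unfolding cntd_def
    by (subst card_split_parity) (simp only: e1 e2 binsum_double binsum_double1 c1 c2)
qed

lemma cnt_zero: "cntd 0 j N = (if j = 0 then N else 0)"
  unfolding cntd_def by auto

lemma cnt_one_big: "j \<ge> 2 \<Longrightarrow> cntd 1 j N = 0"
  unfolding cntd_def using binsum_Suc_le by (auto simp: card_eq_0_iff) (smt (verit) Suc_eq_plus1 of_nat_Suc of_nat_mono)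

lemma ratio_half:
  "(\<lambda>N. real ((N+1) div 2) / real N) \<longlonglongrightarrow> 1/2"
  "(\<lambda>N. real (N div 2) / real N) \<longlonglongrightarrow> 1/2"
proof -
  have lo: "(\<lambda>N. 1/2 - 1 / real N) \<longlonglongrightarrow> 1/2" and hi: "(\<lambda>N. 1/2 + 1 / real N) \<longlonglongrightarrow> 1/2"
    using tendsto_add[OF tendsto_const[of "1/2::real"] lim_1_over_n] tendsto_diff[OF tendsto_const[of "1/2::real"] lim_1_over_n]
    by simp_all
  have b1: "1/2 - 1/real N \<le> real ((N+1) div 2) / real N \<and> real ((N+1) div 2) / real N \<le> 1/2 + 1/real N" if "N > 0" for N
  proof -
    have "2 * ((N+1) div 2) \<le> N + 1" "N \<le> 2 * ((N+1) div 2)" by linarith+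
    hence "2 * real ((N+1) div 2) \<le> real N + 1" "real N \<le> 2 * real ((N+1) div 2)" by linarith+
    moreover have "(1/2 - 1/real N) * real N = real N/2 - 1" "(1/2 + 1/real N) * real N = real N / 2 + 1" using that by (simp_all add: field_simps)
    ultimately show ?thesis using that by (simp add: pos_le_divide_eq pos_divide_le_eq)
  qed
  have b2: "1/2 - 1/real N \<le> real (N div 2) / real N \<and> real (N div 2) / real N \<le> 1/2 + 1/real N" if "N > 0" for N
  proof -
    have "2 * (N div 2) \<le> N" "N \<le> 2 * (N div 2) + 1" by linarith+
    hence "2 * real (N div 2) \<le> real N" "real N \<le> 2 * real (N div 2) + 1" by linarith+
    moreover have "(1/2 - 1/real N) * real N = real N/2 - 1" "(1/2 + 1/real N) * real N = real N / 2 + 1" using that by (simp_all add: field_simps)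
    ultimately show ?thesis using that by (simp add: pos_le_divide_eq pos_divide_le_eq)
  qed
  have ev: "eventually (\<lambda>N::nat. N > 0) sequentially" by (simp add: eventually_gt_at_top)
  show "(\<lambda>N. real ((N+1) div 2) / real N) \<longlonglongrightarrow> 1/2"
  proof (rule tendsto_sandwich[OF _ _ lo hi])
    show "eventually (\<lambda>N. 1/2 - 1/real N \<le> real ((N+1) div 2) / real N) sequentially"
      using ev by (rule eventually_mono) (use b1 in blast)
    show "eventually (\<lambda>N. real ((N+1) div 2) / real N \<le> 1/2 + 1/real N) sequentially"
      using ev by (rule eventually_mono) (use b1 in blast)
  qed
  show "(\<lambda>N. real (N div 2) / real N) \<longlonglongrightarrow> 1/2"
  proof (rule tendsto_sandwich[OF _ _ lo hi])
    show "eventually (\<lambda>N. 1/2 - 1/real N \<le> real (N div 2) / real N) sequentially"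
      using ev by (rule eventually_mono) (use b2 in blast)
    show "eventually (\<lambda>N. real (N div 2) / real N \<le> 1/2 + 1/real N) sequentially"
      using ev by (rule eventually_mono) (use b2 in blast)
  qed
qed

lemma halve_lim:
  assumes "(\<lambda>N. real (f N) / real N) \<longlonglongrightarrow> L" and g: "g = (\<lambda>N::nat. (N+1) div 2) \<or> g = (\<lambda>N. N div 2)"
  shows "(\<lambda>N. real (f (g N)) / real N) \<longlonglongrightarrow> L/2"
proof -
  have gl: "filterlim g at_top sequentially"
    unfolding filterlim_at_top eventually_sequentially
  proof
    fix Z :: nat show "\<exists>N. \<forall>n\<ge>N. Z \<le> g n"
    proof (rule exI[of _ "2*Z"], intro allI impI)
      fix n assume "2*Z \<le> n"
      thus "Z \<le> g n" using g by (elim disjE) (simp_all add: less_eq_div_iff_mult_less_eq)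
    qed
  qed
  have r: "(\<lambda>N. real (g N) / real N) \<longlonglongrightarrow> 1/2" using g ratio_half by auto
  have c: "(\<lambda>N. real (f (g N)) / real (g N)) \<longlonglongrightarrow> L"
    using filterlim_compose[OF assms(1) gl] by (simp add: o_def)
  have lim: "(\<lambda>N. real (f (g N)) / real (g N) * (real (g N) / real N)) \<longlonglongrightarrow> L * (1/2)"
    by (rule tendsto_mult[OF c r])
  have ev2: "eventually (\<lambda>N. real (f (g N)) / real (g N) * (real (g N) / real N) = real (f (g N)) / real N) sequentially"
  proof -
    have "eventually (\<lambda>N::nat. N \<ge> 2) sequentially" by (simp add: eventually_ge_at_top)
    then show ?thesis
    proof (rule eventually_mono)
      fix N :: nat assume "N \<ge> 2"
      hence "g N > 0" using g by (elim disjE) (simp_all add: less_eq_div_iff_mult_less_eq)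
      thus "real (f (g N)) / real (g N) * (real (g N) / real N) = real (f (g N)) / real N" by simp
    qed
  qed
  show ?thesis using lim unfolding tendsto_cong[OF ev2] by simp
qed



lemma halve_conv:
  assumes "convergent (\<lambda>N. real (f N) / real N)"
  shows "convergent (\<lambda>N. real (f ((N+1) div 2)) / real N)" "convergent (\<lambda>N. real (f (N div 2)) / real N)"
  using assms halve_lim[of f _ "\<lambda>N. (N+1) div 2"] halve_lim[of f _ "\<lambda>N. N div 2"]
  unfolding convergent_def by blast+

lemma seq_even: "(\<lambda>N. real (cntd (2 * u) j N) / real N) =
   (\<lambda>N. real (cntd u j ((N+1) div 2)) / real N + real (cntd u j (N div 2)) / real N)"
  by (simp only: cnt_even of_nat_add add_divide_distrib)

lemma seq_odd: "(\<lambda>N. real (cntd (2 * u + 1) j N) / real N) =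
   (\<lambda>N. real (cntd u (j-1) ((N+1) div 2)) / real N + real (cntd (u+1) (j+1) (N div 2)) / real N)"
  by (simp only: cnt_odd of_nat_add add_divide_distrib)

lemma conv_zero: "convergent (\<lambda>N. real (cntd 0 j N) / real N)"
proof (cases "j = 0")
  case True
  have "(\<lambda>N. real (cntd 0 j N) / real N) \<longlonglongrightarrow> 1"
  proof (rule tendsto_eventually)
    show "eventually (\<lambda>N. real (cntd 0 j N) / real N = 1) sequentially"
      using eventually_gt_at_top[of "0::nat"] by (rule eventually_mono) (simp add: cnt_zero True)
  qed
  then show ?thesis by (auto simp: convergent_def)
next
  case False then show ?thesis by (simp add: cnt_zero convergent_const)
qed

lemma conv_one_big: "j \<ge> 2 \<Longrightarrow> convergent (\<lambda>N. real (cntd 1 j N) / real N)"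
  using cnt_one_big[of j] by (simp add: convergent_const)

lemma conv_one_nat: "convergent (\<lambda>N. real (cntd 1 (1 - int k) N) / real N)"
proof (induction k)
  case 0
  have "convergent (\<lambda>N. real (cntd 0 (1 - 1) ((N+1) div 2)) / real N + real (cntd 1 (1 + 1) (N div 2)) / real N)"
    by (intro convergent_add halve_conv conv_zero conv_one_big) auto
  then show ?case using seq_odd[of 0 1] by simp
next
  case (Suc k)
  have "convergent (\<lambda>N. real (cntd 0 (1 - int (Suc k) - 1) ((N+1) div 2)) / real N + real (cntd 1 (1 - int (Suc k) + 1) (N div 2)) / real N)"
    using Suc by (intro convergent_add halve_conv conv_zero) auto
  then show ?case using seq_odd[of 0 "1 - int (Suc k)"] by simp
qed

lemma conv_one: "convergent (\<lambda>N. real (cntd 1 j N) / real N)"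
proof (cases "j \<ge> 2")
  case True then show ?thesis by (rule conv_one_big)
next
  case False
  then have "j = 1 - int (nat (1 - j))" by simp
  then show ?thesis using conv_one_nat[of "nat (1 - j)"] by metis
qed

lemma conv_all: "convergent (\<lambda>N. real (cntd t j N) / real N)"
proof (induction t arbitrary: j rule: less_induct)
  case (less t)
  show ?case
  proof (cases "t \<le> 1")
    case True
    then have "t = 0 \<or> t = 1" by auto
    then show ?thesis using conv_zero conv_one by auto
  next
    case False
    show ?thesis
    proof (cases "even t")
      case True
      then obtain u where u: "t = 2 * u" by auto
      with False have "u < t" by auto
      then show ?thesis using less.IH[OF \<open>u < t\<close>] unfolding u seq_even by (intro convergent_add halve_conv)
    next
      case odd: False
      then obtain u where u: "t = 2 * u + 1" by (metis oddE)
      with False have "u < t" "u + 1 < t" by auto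
      then show ?thesis using less.IH[OF \<open>u < t\<close>] less.IH[OF \<open>u + 1 < t\<close>] unfolding u seq_odd by (intro convergent_add halve_conv)
    qed
  qed
qed

lemma delta_lim: "(\<lambda>N. real (cntd t j N) / real N) \<longlonglongrightarrow> delta j t"
  using conv_all[of t j] unfolding convergent_LIMSEQ_iff delta_def cntd_def .

lemma delta_even: "delta j (2 * u) = delta j u"
proof -
  have "(\<lambda>N. real (cntd (2 * u) j N) / real N) \<longlonglongrightarrow> delta j u / 2 + delta j u / 2"
    unfolding seq_even by (intro tendsto_add halve_lim delta_lim) auto
  then show ?thesis using LIMSEQ_unique[OF delta_lim] by fastforce
qed

lemma delta_odd: "delta j (2 * u + 1) = delta (j-1) u / 2 + delta (j+1) (u+1) / 2"
proof -
  have "(\<lambda>N. real (cntd (2 * u + 1) j N) / real N) \<longlonglongrightarrow> delta (j-1) u / 2 + delta (j+1) (u+1) / 2"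
    unfolding seq_odd by (intro tendsto_add halve_lim delta_lim) auto
  then show ?thesis using LIMSEQ_unique[OF delta_lim] by fastforce
qed

lemma delta_zero: "delta j 0 = (if j = 0 then 1 else 0)"
proof -
  have "(\<lambda>N. real (cntd 0 j N) / real N) \<longlonglongrightarrow> (if j = 0 then 1 else 0)"
  proof (rule tendsto_eventually)
    show "eventually (\<lambda>N. real (cntd 0 j N) / real N = (if j = 0 then 1 else 0)) sequentially"
      using eventually_gt_at_top[of "0::nat"] by (rule eventually_mono) (simp add: cnt_zero)
  qed
  then show ?thesis using LIMSEQ_unique[OF delta_lim] by fastforce
qed

lemma delta_one_big: "j \<ge> 2 \<Longrightarrow> delta j 1 = 0"
  using LIMSEQ_unique[OF delta_lim[of 1 j]] cnt_one_big[of j] by simp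

lemma delta_one: "delta (1 - int m) 1 = (1/2) ^ Suc m"
proof (induction m)
  case 0
  show ?case using delta_odd[of 1 0] delta_zero[of 0] delta_one_big[of 2] by simp
next
  case (Suc m)
  have "delta (1 - int (Suc m)) 1 = delta (1 - int (Suc m) - 1) 0 / 2 + delta (1 - int (Suc m) + 1) 1 / 2"
    using delta_odd[of "1 - int (Suc m)" 0] by simp
  also have "1 - int (Suc m) + 1 = 1 - int m" by simp
  finally show ?case using Suc delta_zero[of "1 - int (Suc m) - 1"] by simp
qed



definition h0 :: "complex \<Rightarrow> complex \<Rightarrow> complex \<Rightarrow> complex" where
  "h0 e b r = (e + b * r) / 2"
definition h1 :: "complex \<Rightarrow> complex \<Rightarrow> complex \<Rightarrow> complex" where
  "h1 e b r = 2 * r / (e + b * r)"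
definition rs :: "complex \<Rightarrow> complex" where
  "rs e = e * (2 - e)"

locale small =
  fixes e b :: complex
  assumes eb: "e * b = 1" and he: "norm (e - 1) \<le> 1/100" and hb: "norm (b - 1) \<le> 1/100"
begin

lemma norm_e: "norm e \<le> 101/100"
  using norm_triangle_ineq[of "e-1" 1] he by simp

lemma norm_b: "norm b \<le> 101/100"
  using norm_triangle_ineq[of "b-1" 1] hb by simp

lemma T_bound:
  assumes hr: "norm (r - 1) \<le> 1/2"
  shows "norm ((e-1) + (b-1)*r + (r-1)) \<le> 21/40"
proof -
  have nr: "norm r \<le> 3/2" using norm_triangle_ineq[of "r-1" 1] hr by simp
  have "norm ((b-1)*r) \<le> (1/100) * (3/2)"
    unfolding norm_mult by (rule mult_mono) (use hb nr in auto)
  then have "norm ((e-1) + (b-1)*r + (r-1)) \<le> 1/100 + (1/100)*(3/2) + 1/2"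
    using norm_triangle_ineq[of "(e-1) + (b-1)*r" "r-1"] norm_triangle_ineq[of "e-1" "(b-1)*r"] he hr
    by linarith
  then show ?thesis by simp
qed

lemma den_bound:
  assumes hr: "norm (r - 1) \<le> 1/2"
  shows "norm (e + b * r) \<ge> 7/5"
proof -
  have "e + b * r = 2 + ((e-1) + (b-1)*r + (r-1))" by (simp add: algebra_simps)
  then have "norm (e + b*r) \<ge> norm (2::complex) - norm ((e-1) + (b-1)*r + (r-1))"
    by (metis norm_diff_ineq diff_minus_eq_add norm_minus_cancel)
  then show ?thesis using T_bound[OF hr] by simp
qed

lemma den_nz: "norm (r - 1) \<le> 1/2 \<Longrightarrow> e + b * r \<noteq> 0"
  using den_bound[of r] by auto

lemma h0_bound:
  assumes hr: "norm (r - 1) \<le> 1/2"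
  shows "norm (h0 e b r - 1) \<le> 1/2"
proof -
  have eq: "h0 e b r - 1 = ((e-1) + (b-1)*r + (r-1)) / 2" by (simp add: h0_def field_simps)
  have "norm (h0 e b r - 1) = norm ((e-1) + (b-1)*r + (r-1)) / 2"
    using arg_cong[OF eq, of norm] by (simp only: norm_divide norm_numeral)
  then show ?thesis using T_bound[OF hr] by linarith
qed

lemma h1_bound:
  assumes hr: "norm (r - 1) \<le> 1/2"
  shows "norm (h1 e b r - 1) \<le> 1/2"
proof -
  have nz: "e + b * r \<noteq> 0" using den_nz[OF hr] .
  have nr: "norm r \<le> 3/2" using norm_triangle_ineq[of "r-1" 1] hr by simp
  have "norm ((b-1)*r) \<le> (1/100) * (3/2)"
    unfolding norm_mult by (rule mult_mono) (use hb nr in auto)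
  then have num: "norm ((r-1) - (e-1) - (b-1)*r) \<le> 1/2 + 1/100 + (1/100)*(3/2)"
    using norm_triangle_ineq4[of "(r-1) - (e-1)" "(b-1)*r"] norm_triangle_ineq4[of "r-1" "e-1"] he hr
    by linarith
  have "h1 e b r - 1 = ((r-1) - (e-1) - (b-1)*r) / (e + b*r)"
    using nz by (simp add: h1_def field_simps)
  then have "norm (h1 e b r - 1) = norm ((r-1) - (e-1) - (b-1)*r) / norm (e + b*r)"
    by (simp add: norm_divide)
  also have "\<dots> \<le> (21/40) / (7/5)"
    by (rule frac_le) (use num den_bound[OF hr] in auto)
  finally show ?thesis by simp
qed

lemma h1_contr:
  assumes hr: "norm (r - 1) \<le> 1/2"
  shows "norm (h1 e b r - rs e) \<le> 3/4 * norm (r - rs e)"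
proof -
  have nz: "e + b * r \<noteq> 0" using den_nz[OF hr] .
  have "h1 e b r - rs e = e * (r - rs e) / (e + b * r)"
  proof -
    have "2 * r - e * (2 - e) * (e + b * r) = e * (r - e * (2 - e))"
    proof -
      have "e * (2 - e) * (b * r) = (e * b) * (2 - e) * r" by (simp add: algebra_simps)
      also have "\<dots> = (2 - e) * r" using eb by simp
      finally show ?thesis by (simp add: algebra_simps)
    qed
    then show ?thesis using nz by (simp add: h1_def rs_def field_simps)
  qed
  then have "norm (h1 e b r - rs e) = norm e * norm (r - rs e) / norm (e + b * r)"
    by (simp add: norm_divide norm_mult)
  also have "\<dots> \<le> (101/100) * norm (r - rs e) / (7/5)"
    by (rule frac_le) (use mult_right_mono[OF norm_e norm_ge_zero[of "r - rs e"]] den_bound[OF hr] in auto)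
  also have "\<dots> \<le> 3/4 * norm (r - rs e)" by simp
  finally show ?thesis .
qed

lemma rs_bound: "norm (rs e - 1) \<le> 1/10000"
proof -
  have "rs e - 1 = - ((e - 1) * (e - 1))" by (simp add: rs_def algebra_simps)
  then have "norm (rs e - 1) = norm (e-1) * norm (e-1)" by (simp add: norm_mult)
  also have "\<dots> \<le> (1/100) * (1/100)" by (rule mult_mono) (use he in auto)
  finally show ?thesis by simp
qed

lemma dist_rs:
  assumes hr: "norm (r - 1) \<le> 1/2"
  shows "norm (r - rs e) \<le> 3/5"
  using norm_triangle_ineq4[of "r - 1" "rs e - 1"] rs_bound hr by simp

lemma h0_rs: "h0 e b r - 1 = b * (r - rs e) / 2"
proof -
  have "b * (e * (2 - e)) = (e * b) * (2 - e)" by (simp add: algebra_simps)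
  then have "b * rs e = 2 - e" using eb by (simp add: rs_def)
  moreover have "h0 e b r - 1 = (b * r - (2 - e)) / 2" by (simp add: h0_def field_simps)
  ultimately show ?thesis by (simp add: right_diff_distrib)
qed

lemma Ln_small: fixes w :: complex assumes "norm w \<le> 1/2" shows "norm (Ln (1 + w)) \<le> 2 * norm w"
proof -
  have "norm (Ln (1 + w) - w) \<le> norm w ^ 2 / (1 - norm w)" using Ln_approx_linear assms by simp
  also have "\<dots> \<le> norm w" 
  proof -
    have "norm w ^ 2 \<le> norm w * (1 - norm w)" using assms by (simp add: power2_eq_square mult_left_mono)
    then show ?thesis using assms by (simp add: divide_le_eq)
  qed
  finally show ?thesis using norm_triangle_ineq[of "Ln (1+w) - w" w] by simp
qed

lemma Ln_h0:
  assumes hr: "norm (r - 1) \<le> 1/2"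
  shows "norm (Ln (h0 e b r)) \<le> 2 * norm (r - rs e)"
proof -
  define w where "w = b * (r - rs e) / 2"
  have hw: "h0 e b r = 1 + w" using h0_rs[of r] unfolding w_def by (metis add_diff_cancel_left' diff_add_cancel add.commute)
  have nw: "norm w \<le> (101/100) * norm (r - rs e) / 2" unfolding w_def norm_divide norm_mult
    using mult_right_mono[OF norm_b norm_ge_zero[of "r - rs e"]] by simp
  have "norm w \<le> (101/100) * (3/5) / 2" using nw dist_rs[OF hr] by linarith
  then have "norm (Ln (1 + w)) \<le> 2 * norm w" by (intro Ln_small) simp
  also have "\<dots> \<le> 2 * norm (r - rs e)" using nw norm_ge_zero[of "r - rs e"] by linarith
  finally show ?thesis using hw by simp
qed

lemma h0_Re: "norm (r - 1) \<le> 1/2 \<Longrightarrow> Re (h0 e b r) > 0"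
  using h0_bound[of r] abs_Re_le_cmod[of "h0 e b r - 1"] by auto

lemma h0_nz: "norm (r - 1) \<le> 1/2 \<Longrightarrow> h0 e b r \<noteq> 0"
  using h0_Re[of r] by auto

lemma h0_h1: "norm (r - 1) \<le> 1/2 \<Longrightarrow> h0 e b r * h1 e b r = r"
  using den_nz[of r] by (simp add: h0_def h1_def)

lemma phi1_bound: "norm (e / (2 - b) - 1) \<le> 1/2"
proof -
  have nb: "norm (2 - b) \<ge> 99/100"
    using norm_triangle_ineq2[of 1 "b - 1"] hb by (simp add: algebra_simps)
  then have nz: "2 - b \<noteq> 0" by auto
  have "e / (2 - b) - 1 = ((e - 1) + (b - 1)) / (2 - b)" using nz by (simp add: field_simps)
  then have "norm (e / (2 - b) - 1) = norm ((e - 1) + (b - 1)) / norm (2 - b)" by (simp add: norm_divide)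
  also have "\<dots> \<le> (2/100) / (99/100)"
    by (rule frac_le) (use norm_triangle_ineq[of "e-1" "b-1"] he hb nb in auto)
  finally show ?thesis by simp
qed

end



definition ee :: "complex \<Rightarrow> complex" where "ee \<theta> = exp (2 * of_real pi * \<i> * \<theta>)"
definition eb :: "complex \<Rightarrow> complex" where "eb \<theta> = exp (- (2 * of_real pi * \<i> * \<theta>))"

lemma small_theta: assumes "norm \<theta> \<le> 1/2000" shows "small (ee \<theta>) (eb \<theta>)"
proof -
  define z where "z = 2 * of_real pi * \<i> * \<theta>"
  have nz: "norm z = 2 * pi * norm \<theta>" unfolding z_def by (simp add: norm_mult)
  have "norm z \<le> 2 * 4 * (1/2000)"
    unfolding nz using pi_less_4 assms by (intro mult_mono) auto
  then have nz2: "norm z \<le> 1/250" by simp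
  have a: "norm (exp z - 1) \<le> 1/100"
    using norm_exp_bounds(2)[of z] nz2 by simp
  have b: "norm (exp (-z) - 1) \<le> 1/100"
    using norm_exp_bounds(2)[of "-z"] nz2 by simp
  have c: "exp z * exp (-z) = 1" by (simp add: exp_minus)
  show ?thesis unfolding small_def ee_def eb_def z_def[symmetric] using a b c by auto
qed

lemma ee_eb: "ee \<theta> * eb \<theta> = 1" by (simp add: ee_def eb_def exp_minus)

function Rf :: "nat \<Rightarrow> complex \<Rightarrow> complex" where
  "Rf t \<theta> = (if t = 0 then ee \<theta> / (2 - eb \<theta>) else if even t then h0 (ee \<theta>) (eb \<theta>) (Rf (t div 2) \<theta>)
      else h1 (ee \<theta>) (eb \<theta>) (Rf (t div 2) \<theta>))"
  by auto
termination by (relation "Wellfounded.measure fst") auto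

declare Rf.simps[simp del]

function Gf :: "nat \<Rightarrow> complex \<Rightarrow> complex" where
  "Gf t \<theta> = (if t = 0 then 0 else Gf (t div 2) \<theta> + (if odd t then Ln (h0 (ee \<theta>) (eb \<theta>) (Rf (t div 2) \<theta>)) else 0))"
  by auto
termination by (relation "Wellfounded.measure fst") auto

declare Gf.simps[simp del]

lemma Rf_0: "Rf 0 \<theta> = ee \<theta> / (2 - eb \<theta>)" by (simp add: Rf.simps)
lemma Rf_even: "t > 0 \<Longrightarrow> even t \<Longrightarrow> Rf t \<theta> = h0 (ee \<theta>) (eb \<theta>) (Rf (t div 2) \<theta>)" by (simp add: Rf.simps[of t])
lemma Rf_odd: "odd t \<Longrightarrow> Rf t \<theta> = h1 (ee \<theta>) (eb \<theta>) (Rf (t div 2) \<theta>)" by (simp add: Rf.simps[of t]) presburger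
lemma Gf_0: "Gf 0 \<theta> = 0" by (simp add: Gf.simps)
lemma Gf_even: "even t \<Longrightarrow> Gf t \<theta> = Gf (t div 2) \<theta>" by (cases "t = 0") (simp_all add: Gf.simps[of t] Gf_0)
lemma Gf_odd: "odd t \<Longrightarrow> Gf t \<theta> = Gf (t div 2) \<theta> + Ln (h0 (ee \<theta>) (eb \<theta>) (Rf (t div 2) \<theta>))"
  by (simp add: Gf.simps[of t]) presburger

lemma drop_term: assumes "(x::real) + (if P then 8 * norm (y::complex) else 0) \<le> z" shows "x \<le> z"
proof (cases P)
  case True then have "x + 8 * norm y \<le> z" using assms by simp
  then show ?thesis using norm_ge_zero[of y] by linarith
next
  case False then show ?thesis using assms by simp
qed

lemma Rf_inv: "norm \<theta> \<le> 1/2000 \<Longrightarrow> norm (Rf t \<theta> - 1) \<le> 1/2"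
proof (induction t rule: less_induct)
  case (less t)
  interpret small "ee \<theta>" "eb \<theta>" using small_theta[OF less.prems] .
  show ?case
  proof (cases "t = 0")
    case True then show ?thesis using phi1_bound by (simp add: Rf_0)
  next
    case False
    then have "t div 2 < t" by simp
    note IH = less.IH[OF this less.prems]
    show ?thesis
    proof (cases "even t")
      case True then show ?thesis using False h0_bound[OF IH] by (simp add: Rf_even)
    next
      case odd: False then show ?thesis using h1_bound[OF IH] by (simp add: Rf_odd)
    qed
  qed
qed

lemma Gf_bound_aux:
  assumes "norm \<theta> \<le> 1/2000"
  shows "norm (Gf t \<theta>) + (if odd t then 8 * norm (Rf t \<theta> - rs (ee \<theta>)) else 0) \<le> 8 * real (num_blocks t)"
proof (induction t rule: less_induct)
  case (less t)
  interpret small "ee \<theta>" "eb \<theta>" using small_theta[OF assms] .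
  show ?case
  proof (cases "t = 0")
    case True then show ?thesis by (simp add: Gf_0)
  next
    case False
    define u where "u = t div 2"
    then have "u < t" using False by simp
    note IH = less.IH[OF this]
    have inv: "norm (Rf u \<theta> - 1) \<le> 1/2" using Rf_inv assms by blast
    have nbu: "norm (Gf u \<theta>) \<le> 8 * real (num_blocks u)" using IH by (rule drop_term)
    show ?thesis
    proof (cases "even t")
      case True then show ?thesis using nbu num_blocks_split[of t] by (simp add: Gf_even u_def)
    next
      case odd: False
      have G: "norm (Gf t \<theta>) \<le> norm (Gf u \<theta>) + 2 * norm (Rf u \<theta> - rs (ee \<theta>))"
        using odd Gf_odd[of t \<theta>] Ln_h0[OF inv] norm_triangle_ineq[of "Gf u \<theta>" "Ln (h0 (ee \<theta>) (eb \<theta>) (Rf u \<theta>))"]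
        unfolding u_def by simp
      have R: "norm (Rf t \<theta> - rs (ee \<theta>)) \<le> 3/4 * norm (Rf u \<theta> - rs (ee \<theta>))"
        using odd h1_contr[OF inv] Rf_odd[of t \<theta>] unfolding u_def by simp
      have sum: "norm (Gf t \<theta>) + 8 * norm (Rf t \<theta> - rs (ee \<theta>)) \<le> norm (Gf u \<theta>) + 8 * norm (Rf u \<theta> - rs (ee \<theta>))"
        using G R by linarith
      show ?thesis
      proof (cases "even u")
        case True
        have "num_blocks t = num_blocks u + 1" using num_blocks_split[of t] odd True unfolding u_def by simp
        then show ?thesis using sum nbu dist_rs[OF inv] odd by simp
      next
        case False
        have "num_blocks t = num_blocks u" using num_blocks_split[of t] odd False unfolding u_def by simp
        then show ?thesis using sum IH odd False by simp
      qed
    qed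
  qed
qed

lemma Gf_bound: "norm \<theta> \<le> 1/2000 \<Longrightarrow> norm (Gf t \<theta>) \<le> 8 * real (num_blocks t)"
  using Gf_bound_aux[of \<theta> t] by (rule drop_term)



definition X :: "int \<Rightarrow> complex \<Rightarrow> complex" where
  "X k \<theta> = exp (2 * of_real pi * \<i> * of_int k * \<theta>)"

lemma X_shift1: "X k \<theta> = ee \<theta> * X (k - 1) \<theta>"
proof -
  have "X k \<theta> = exp (2 * of_real pi * \<i> * \<theta> + 2 * of_real pi * \<i> * of_int (k - 1) * \<theta>)"
    unfolding X_def by (rule arg_cong[where f=exp]) (simp add: algebra_simps)
  also have "\<dots> = ee \<theta> * X (k - 1) \<theta>" unfolding exp_add ee_def X_def ..
  finally show ?thesis .
qed

lemma X_shift2: "X k \<theta> = eb \<theta> * X (k + 1) \<theta>"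
proof -
  have "X k \<theta> = exp (- (2 * of_real pi * \<i> * \<theta>) + 2 * of_real pi * \<i> * of_int (k + 1) * \<theta>)"
    unfolding X_def by (rule arg_cong[where f=exp]) (simp add: algebra_simps)
  also have "\<dots> = eb \<theta> * X (k + 1) \<theta>" unfolding exp_add eb_def X_def ..
  finally show ?thesis .
qed

lemma X_one_minus: "X (1 - int m) \<theta> = ee \<theta> * eb \<theta> ^ m"
proof -
  have "X (1 - int m) \<theta> = exp (2 * of_real pi * \<i> * \<theta> + of_nat m * (- (2 * of_real pi * \<i> * \<theta>)))"
    unfolding X_def by (rule arg_cong[where f=exp]) (simp add: algebra_simps)
  also have "\<dots> = ee \<theta> * eb \<theta> ^ m" unfolding exp_add ee_def eb_def exp_of_nat_mult ..
  finally show ?thesis .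
qed

lemma X_zero: "X 0 \<theta> = 1" by (simp add: X_def)

lemma bij_minus1: "bij_betw (\<lambda>k::int. k - 1) UNIV UNIV"
  by (rule bij_betwI[where g="\<lambda>k. k + 1"]) auto
lemma bij_plus1: "bij_betw (\<lambda>k::int. k + 1) UNIV UNIV"
  by (rule bij_betwI[where g="\<lambda>k. k - 1"]) auto

lemma shift_left:
  assumes "((\<lambda>k. of_real (delta k s) * X k \<theta>) has_sum a) UNIV"
  shows "((\<lambda>k. of_real (delta (k - 1) s) * X k \<theta>) has_sum (ee \<theta> * a)) UNIV"
proof -
  have "((\<lambda>k. ee \<theta> * (of_real (delta k s) * X k \<theta>)) has_sum (ee \<theta> * a)) UNIV"
    by (rule has_sum_cmult_right[OF assms])
  then have "((\<lambda>k. ee \<theta> * (of_real (delta (k - 1) s) * X (k - 1) \<theta>)) has_sum (ee \<theta> * a)) UNIV"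
    using has_sum_reindex_bij_betw[OF bij_minus1, of "\<lambda>k. ee \<theta> * (of_real (delta k s) * X k \<theta>)"] by simp
  moreover have "(\<lambda>k. ee \<theta> * (of_real (delta (k - 1) s) * X (k - 1) \<theta>)) = (\<lambda>k. of_real (delta (k - 1) s) * X k \<theta>)"
  proof (rule ext)
    fix k
    have x: "X k \<theta> = ee \<theta> * X (k - 1) \<theta>" by (rule X_shift1)
    show "ee \<theta> * (of_real (delta (k - 1) s) * X (k - 1) \<theta>) = of_real (delta (k - 1) s) * X k \<theta>"
      by (simp only: x mult_ac)
  qed
  ultimately show ?thesis by simp
qed

lemma shift_right:
  assumes "((\<lambda>k. of_real (delta k s) * X k \<theta>) has_sum a) UNIV"
  shows "((\<lambda>k. of_real (delta (k + 1) s) * X k \<theta>) has_sum (eb \<theta> * a)) UNIV"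
proof -
  have "((\<lambda>k. eb \<theta> * (of_real (delta k s) * X k \<theta>)) has_sum (eb \<theta> * a)) UNIV"
    by (rule has_sum_cmult_right[OF assms])
  then have "((\<lambda>k. eb \<theta> * (of_real (delta (k + 1) s) * X (k + 1) \<theta>)) has_sum (eb \<theta> * a)) UNIV"
    using has_sum_reindex_bij_betw[OF bij_plus1, of "\<lambda>k. eb \<theta> * (of_real (delta k s) * X k \<theta>)"] by simp
  moreover have "(\<lambda>k. eb \<theta> * (of_real (delta (k + 1) s) * X (k + 1) \<theta>)) = (\<lambda>k. of_real (delta (k + 1) s) * X k \<theta>)"
  proof (rule ext)
    fix k
    have x: "X k \<theta> = eb \<theta> * X (k + 1) \<theta>" by (rule X_shift2)
    show "eb \<theta> * (of_real (delta (k + 1) s) * X (k + 1) \<theta>) = of_real (delta (k + 1) s) * X k \<theta>"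
      by (simp only: x mult_ac)
  qed
  ultimately show ?thesis by simp
qed

lemma combo:
  assumes A: "((\<lambda>k. of_real (delta k u) * X k \<theta>) has_sum a) UNIV"
      and B: "((\<lambda>k. of_real (delta k (u+1)) * X k \<theta>) has_sum b) UNIV"
  shows "((\<lambda>k. of_real (delta k (2*u+1)) * X k \<theta>) has_sum (ee \<theta> * a / 2 + eb \<theta> * b / 2)) UNIV"
proof -
  have "((\<lambda>k. (1/2) * (of_real (delta (k - 1) u) * X k \<theta>) + (1/2) * (of_real (delta (k + 1) (u+1)) * X k \<theta>))
      has_sum ((1/2) * (ee \<theta> * a) + (1/2) * (eb \<theta> * b))) UNIV"
    by (intro has_sum_add has_sum_cmult_right shift_left shift_right A B)
  moreover have "(\<lambda>k. (1/2) * (of_real (delta (k - 1) u) * X k \<theta>) + (1/2) * (of_real (delta (k + 1) (u+1)) * X k \<theta>))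
     = (\<lambda>k. of_real (delta k (2*u+1)) * X k \<theta>)"
  proof (rule ext)
    fix k
    have d: "delta k (2*u+1) = delta (k-1) u / 2 + delta (k+1) (u+1) / 2" by (rule delta_odd)
    show "(1/2) * (of_real (delta (k - 1) u) * X k \<theta>) + (1/2) * (of_real (delta (k + 1) (u+1)) * X k \<theta>)
     = of_real (delta k (2*u+1)) * X k \<theta>"
      unfolding d by (simp add: algebra_simps)
  qed
  ultimately show ?thesis by (simp add: algebra_simps)
qed

lemma base0: "((\<lambda>k. of_real (delta k 0) * X k \<theta>) has_sum 1) UNIV"
  by (rule has_sum_finite_neutralI[where B="{0}"]) (auto simp: delta_zero X_zero)

lemma (in small) two_minus_b: "2 - b \<noteq> 0"
  using norm_triangle_ineq2[of 1 "b - 1"] hb by (auto simp: algebra_simps)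

lemma delta_one_big': "\<not> j \<le> 1 \<Longrightarrow> delta j (Suc 0) = 0"
  using delta_one_big[of j] by simp

lemma base1:
  assumes "norm \<theta> \<le> 1/2000"
  shows "((\<lambda>k. of_real (delta k 1) * X k \<theta>) has_sum (ee \<theta> / (2 - eb \<theta>))) UNIV"
proof -
  interpret small "ee \<theta>" "eb \<theta>" using small_theta[OF assms] .
  define q where "q = eb \<theta> / 2"
  have nq: "norm q < 1" unfolding q_def using norm_b by (simp add: norm_divide)
  have f: "of_real (delta (1 - int m) 1) * X (1 - int m) \<theta> = (ee \<theta> / 2) * q ^ m" for m
    unfolding delta_one X_one_minus q_def by (simp add: power_divide field_simps)
  have s: "(\<lambda>m. (ee \<theta> / 2) * q ^ m) sums ((ee \<theta> / 2) * (1 / (1 - q)))"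
    by (intro sums_mult geometric_sums nq)
  have sn: "summable (\<lambda>m. norm ((ee \<theta> / 2) * q ^ m))"
    unfolding norm_mult norm_power
    by (intro summable_mult summable_geometric) (use nq in simp)
  have "((\<lambda>m. (ee \<theta> / 2) * q ^ m) has_sum ((ee \<theta> / 2) * (1 / (1 - q)))) UNIV"
    by (rule norm_summable_imp_has_sum[OF sn s])
  then have h: "((\<lambda>m. of_real (delta (1 - int m) 1) * X (1 - int m) \<theta>) has_sum (ee \<theta> / (2 - eb \<theta>))) UNIV"
    unfolding f q_def using two_minus_b by (simp add: field_simps)
  have bij: "bij_betw (\<lambda>m::nat. 1 - int m) UNIV {k. k \<le> 1}"
    by (rule bij_betwI[where g="\<lambda>k. nat (1 - k)"]) auto
  have "((\<lambda>k. of_real (delta k 1) * X k \<theta>) has_sum (ee \<theta> / (2 - eb \<theta>))) {k. k \<le> 1}"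
    using has_sum_reindex_bij_betw[OF bij, of "\<lambda>k. of_real (delta k 1) * X k \<theta>"] h by simp
  then show ?thesis
    by (subst (asm) has_sum_cong_neutral[where T=UNIV and g="\<lambda>k. of_real (delta k 1) * X k \<theta>"])
       (auto simp: delta_one_big')
qed



lemma main_has_sum:
  assumes "norm \<theta> \<le> 1/2000"
  shows "((\<lambda>k. of_real (delta k t) * X k \<theta>) has_sum exp (Gf t \<theta>)) UNIV \<and>
         ((\<lambda>k. of_real (delta k (t+1)) * X k \<theta>) has_sum (exp (Gf t \<theta>) * Rf t \<theta>)) UNIV"
proof (induction t rule: less_induct)
  case (less t)
  interpret small "ee \<theta>" "eb \<theta>" using small_theta[OF assms] .
  show ?case
  proof (cases "t = 0")
    case True then show ?thesis using base0[of \<theta>] base1[OF assms] by (simp add: Gf_0 Rf_0)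
  next
    case False
    define u where "u = t div 2"
    then have "u < t" using False by simp
    note IH = less.IH[OF this]
    have inv: "norm (Rf u \<theta> - 1) \<le> 1/2" using Rf_inv assms by blast
    have C: "((\<lambda>k. of_real (delta k (2*u+1)) * X k \<theta>) has_sum (ee \<theta> * exp (Gf u \<theta>) / 2 + eb \<theta> * (exp (Gf u \<theta>) * Rf u \<theta>) / 2)) UNIV"
      using combo IH by blast
    have val: "ee \<theta> * exp (Gf u \<theta>) / 2 + eb \<theta> * (exp (Gf u \<theta>) * Rf u \<theta>) / 2 = exp (Gf u \<theta>) * h0 (ee \<theta>) (eb \<theta>) (Rf u \<theta>)"
      by (simp add: h0_def algebra_simps add_divide_distrib)
    show ?thesis
    proof (cases "even t")
      case True
      then have t: "t = 2 * u" unfolding u_def by simp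
      have G: "Gf t \<theta> = Gf u \<theta>" using Gf_even[OF True] unfolding u_def by simp
      have R: "Rf t \<theta> = h0 (ee \<theta>) (eb \<theta>) (Rf u \<theta>)" using Rf_even[OF _ True] False unfolding u_def by simp
      have "(\<lambda>k. of_real (delta k t) * X k \<theta>) = (\<lambda>k. of_real (delta k u) * X k \<theta>)"
        unfolding t delta_even ..
      then show ?thesis using IH C val G R t by simp
    next
      case odd: False
      then have t: "t = 2 * u + 1" unfolding u_def by simp
      have G: "exp (Gf t \<theta>) = exp (Gf u \<theta>) * h0 (ee \<theta>) (eb \<theta>) (Rf u \<theta>)"
        using Gf_odd[OF odd, of \<theta>] h0_nz[OF inv] unfolding u_def by (simp add: exp_add)
      have R: "Rf t \<theta> = h1 (ee \<theta>) (eb \<theta>) (Rf u \<theta>)" using Rf_odd[OF odd] unfolding u_def by simp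
      have t1: "t + 1 = 2 * (u + 1)" using t by simp
      have f2: "(\<lambda>k. of_real (delta k (t+1)) * X k \<theta>) = (\<lambda>k. of_real (delta k (u+1)) * X k \<theta>)"
        unfolding t1 delta_even ..
      have v2: "exp (Gf t \<theta>) * Rf t \<theta> = exp (Gf u \<theta>) * Rf u \<theta>"
        unfolding G R using h0_h1[OF inv] by (simp add: mult.assoc)
      have e2: "((\<lambda>k. of_real (delta k (t+1)) * X k \<theta>) has_sum (exp (Gf t \<theta>) * Rf t \<theta>)) UNIV"
        unfolding f2 v2 using IH by blast
      have e1: "((\<lambda>k. of_real (delta k t) * X k \<theta>) has_sum exp (Gf t \<theta>)) UNIV"
        unfolding G using C val t by simp
      show ?thesis using e1 e2 by blast
    qed
  qed
qed

lemma charfun_eq: "norm \<theta> \<le> 1/2000 \<Longrightarrow> charfun_delta t \<theta> = exp (Gf t \<theta>)"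
  unfolding charfun_delta_def using main_has_sum[of \<theta> t] unfolding X_def by (auto intro: infsumI)

lemma ee_holo: "ee holomorphic_on S" unfolding ee_def by (intro holomorphic_intros)
lemma eb_holo: "eb holomorphic_on S" unfolding eb_def by (intro holomorphic_intros)

abbreviation "B0 \<equiv> ball (0::complex) (1/2000)"

lemma in_B0: "\<theta> \<in> B0 \<Longrightarrow> norm \<theta> \<le> 1/2000" by simp

lemma Rf_holo: "Rf t holomorphic_on B0"
proof (induction t rule: less_induct)
  case (less t)
  show ?case
  proof (cases "t = 0")
    case True
    have "Rf t = (\<lambda>\<theta>. ee \<theta> / (2 - eb \<theta>))" using True by (simp add: Rf_0 fun_eq_iff)
    moreover have "(\<lambda>\<theta>. ee \<theta> / (2 - eb \<theta>)) holomorphic_on B0"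
    proof (intro holomorphic_intros ee_holo eb_holo)
      fix \<theta> assume "\<theta> \<in> B0"
      then interpret small "ee \<theta>" "eb \<theta>" using small_theta by simp
      show "2 - eb \<theta> \<noteq> 0" by (rule two_minus_b)
    qed
    ultimately show ?thesis by simp
  next
    case False
    then have IH: "Rf (t div 2) holomorphic_on B0" using less.IH by simp
    show ?thesis
    proof (cases "even t")
      case True
      have "Rf t = (\<lambda>\<theta>. (ee \<theta> + eb \<theta> * Rf (t div 2) \<theta>) / 2)"
        using True False by (simp add: Rf_even h0_def fun_eq_iff)
      moreover have "(\<lambda>\<theta>. (ee \<theta> + eb \<theta> * Rf (t div 2) \<theta>) / 2) holomorphic_on B0"
        by (intro holomorphic_intros ee_holo eb_holo IH) auto
      ultimately show ?thesis by simp
    next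
      case odd: False
      have "Rf t = (\<lambda>\<theta>. 2 * Rf (t div 2) \<theta> / (ee \<theta> + eb \<theta> * Rf (t div 2) \<theta>))"
        using odd by (simp add: Rf_odd h1_def fun_eq_iff)
      moreover have "(\<lambda>\<theta>. 2 * Rf (t div 2) \<theta> / (ee \<theta> + eb \<theta> * Rf (t div 2) \<theta>)) holomorphic_on B0"
      proof (intro holomorphic_intros ee_holo eb_holo IH)
        fix \<theta> assume th: "\<theta> \<in> B0"
        then interpret small "ee \<theta>" "eb \<theta>" using small_theta by simp
        show "ee \<theta> + eb \<theta> * Rf (t div 2) \<theta> \<noteq> 0" using den_nz Rf_inv th by simp
      qed
      ultimately show ?thesis by simp
    qed
  qed
qed

lemma Gf_holo: "Gf t holomorphic_on B0"
proof (induction t rule: less_induct)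
  case (less t)
  show ?case
  proof (cases "t = 0")
    case True
    have "Gf t = (\<lambda>\<theta>. 0)" using True by (simp add: Gf_0 fun_eq_iff)
    then show ?thesis by simp
  next
    case False
    then have IH: "Gf (t div 2) holomorphic_on B0" using less.IH by simp
    show ?thesis
    proof (cases "even t")
      case True
      have "Gf t = Gf (t div 2)" using True by (simp add: Gf_even fun_eq_iff)
      then show ?thesis using IH by simp
    next
      case odd: False
      have "Gf t = (\<lambda>\<theta>. Gf (t div 2) \<theta> + Ln ((ee \<theta> + eb \<theta> * Rf (t div 2) \<theta>) / 2))"
        using odd by (simp add: Gf_odd h0_def fun_eq_iff)
      moreover have "(\<lambda>\<theta>. Gf (t div 2) \<theta> + Ln ((ee \<theta> + eb \<theta> * Rf (t div 2) \<theta>) / 2)) holomorphic_on B0"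
      proof (intro holomorphic_intros ee_holo eb_holo IH Rf_holo)
        fix \<theta> assume th: "\<theta> \<in> B0"
        then interpret small "ee \<theta>" "eb \<theta>" using small_theta by simp
        have "Re (h0 (ee \<theta>) (eb \<theta>) (Rf (t div 2) \<theta>)) > 0" using h0_Re Rf_inv th by simp
        then show "(ee \<theta> + eb \<theta> * Rf (t div 2) \<theta>) / 2 \<notin> \<real>\<^sub>\<le>\<^sub>0"
          by (auto simp: h0_def complex_nonpos_Reals_iff)
      qed auto
      ultimately show ?thesis by simp
    qed
  qed
qed

lemma ee0: "ee 0 = 1" by (simp add: ee_def)
lemma eb0: "eb 0 = 1" by (simp add: eb_def)

lemma Rf_at0: "Rf t 0 = 1"
proof (induction t rule: less_induct)
  case (less t)
  show ?case
  proof (cases "t = 0")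
    case True then show ?thesis by (simp add: Rf_0 ee0 eb0)
  next
    case False
    then have IH: "Rf (t div 2) 0 = 1" using less.IH by simp
    then show ?thesis using False
      by (cases "even t") (simp_all add: Rf_even Rf_odd h0_def h1_def ee0 eb0)
  qed
qed

lemma Gf_at0: "Gf t 0 = 0"
proof (induction t rule: less_induct)
  case (less t)
  show ?case
  proof (cases "t = 0")
    case True then show ?thesis by (simp add: Gf_0)
  next
    case False
    then have IH: "Gf (t div 2) 0 = 0" using less.IH by simp
    then show ?thesis using False
      by (cases "even t") (simp_all add: Gf_even Gf_odd h0_def ee0 eb0 Rf_at0)
  qed
qed



lemma ev_Ln: "eventually (\<lambda>\<theta>. Ln (charfun_delta t \<theta>) = Gf t \<theta>) (nhds 0)"
proof -
  define U where "U = B0 \<inter> Gf t -` ball 0 1"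
  have cont: "continuous_on B0 (Gf t)" using Gf_holo holomorphic_on_imp_continuous_on by blast
  have "open U" unfolding U_def by (rule continuous_open_preimage[OF cont]) auto
  moreover have "0 \<in> U" unfolding U_def by (simp add: Gf_at0)
  moreover have "Ln (charfun_delta t \<theta>) = Gf t \<theta>" if "\<theta> \<in> U" for \<theta>
  proof -
    have th: "norm \<theta> \<le> 1/2000" and g: "norm (Gf t \<theta>) < 1" using that unfolding U_def by auto
    have "\<bar>Im (Gf t \<theta>)\<bar> < 1" using abs_Im_le_cmod[of "Gf t \<theta>"] g by linarith
    then have "- pi < Im (Gf t \<theta>)" "Im (Gf t \<theta>) \<le> pi" using pi_gt3 by linarith+
    then show ?thesis using charfun_eq[OF th] by simp
  qed
  ultimately show ?thesis unfolding eventually_nhds by blast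
qed

lemma deriv_bound:
  assumes "0 < n"
  shows "norm ((deriv ^^ n) (Gf t) 0) \<le> fact n * (8 * real (num_blocks t)) / (1/4000) ^ n"
proof (rule field_le_epsilon)
  fix e :: real assume e: "0 < e"
  define r :: real where "r = 1/4000"
  define e' where "e' = e * r ^ n / fact n"
  have e': "e' > 0" unfolding e'_def r_def using e by simp
  have sub: "cball 0 r \<subseteq> B0" unfolding r_def by auto
  have holo: "Gf t holomorphic_on ball 0 r" using Gf_holo by (rule holomorphic_on_subset) (use sub in auto)
  have cont: "continuous_on (cball 0 r) (Gf t)"
    using Gf_holo holomorphic_on_imp_continuous_on continuous_on_subset sub by blast
  have fin: "Gf t w \<in> ball 0 (8 * real (num_blocks t) + e')" if "w \<in> ball 0 r" for w
  proof -
    have "norm w \<le> 1/2000" using that unfolding r_def by simp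
    then have "norm (Gf t w) \<le> 8 * real (num_blocks t)" by (rule Gf_bound)
    then show ?thesis using e' by simp
  qed
  have "norm ((deriv ^^ n) (Gf t) 0) \<le> fact n * (8 * real (num_blocks t) + e') / r ^ n"
    by (rule Cauchy_higher_deriv_bound[OF holo cont fin]) (use assms in \<open>auto simp: r_def\<close>)
  also have "\<dots> = fact n * (8 * real (num_blocks t)) / r ^ n + e"
    unfolding e'_def r_def by (simp add: field_simps)
  finally show "norm ((deriv ^^ n) (Gf t) 0) \<le> fact n * (8 * real (num_blocks t)) / (1/4000) ^ n + e"
    unfolding r_def .
qed

theorem corollary2p3:
  shows "\<exists>C::real. \<forall>t::nat. \<forall>j\<in>{2,3,4,5::nat}. cmod (cumulant j t) \<le> C * real (num_blocks t)"
proof (intro exI allI ballI)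
  fix t j assume j: "j \<in> {2,3,4,5::nat}"
  then have j0: "0 < j" "j \<le> 5" by auto
  have D: "(deriv ^^ j) (\<lambda>\<theta>. Ln (charfun_delta t \<theta>)) 0 = (deriv ^^ j) (Gf t) 0"
    by (rule higher_deriv_cong_ev[OF ev_Ln refl])
  have n2: "norm ((2 * of_real pi * \<i>) ^ j :: complex) \<ge> 1"
  proof -
    have "norm (2 * of_real pi * \<i> :: complex) = 2 * pi" by (simp add: norm_mult)
    then have "norm ((2 * of_real pi * \<i>) ^ j :: complex) = (2 * pi) ^ j" by (simp add: norm_power)
    moreover have "(1::real) \<le> (2 * pi) ^ j" using pi_gt3 by (intro one_le_power) simp
    ultimately show ?thesis by simp
  qed
  have "cmod (cumulant j t) = norm ((deriv ^^ j) (Gf t) 0) / norm ((2 * of_real pi * \<i>) ^ j :: complex)"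
    unfolding cumulant_def D by (simp add: norm_divide)
  also have "\<dots> \<le> norm ((deriv ^^ j) (Gf t) 0)"
  proof -
    have "norm ((deriv ^^ j) (Gf t) 0) * 1 \<le> norm ((deriv ^^ j) (Gf t) 0) * norm ((2 * of_real pi * \<i>) ^ j :: complex)"
      using n2 by (intro mult_left_mono) auto
    then show ?thesis using n2 by (simp add: divide_le_eq)
  qed
  also have "\<dots> \<le> fact j * (8 * real (num_blocks t)) / (1/4000) ^ j" by (rule deriv_bound[OF j0(1)])
  also have "\<dots> = fact j * 4000 ^ j * (8 * real (num_blocks t))" by (simp add: power_one_over field_simps)
  also have "\<dots> \<le> fact 5 * 4000 ^ 5 * (8 * real (num_blocks t))"
  proof (rule mult_right_mono[OF mult_mono])
    show "(fact j :: real) \<le> fact 5" using j0 by (intro fact_mono) auto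
    show "(4000::real) ^ j \<le> 4000 ^ 5" using j0 by (intro power_increasing) auto
  qed auto
  also have "\<dots> = (960 * 4000 ^ 5) * real (num_blocks t)" by (simp add: fact_numeral)
  finally show "cmod (cumulant j t) \<le> (960 * 4000 ^ 5) * real (num_blocks t)" .
qed


end
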